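(* Let $\Phi$ be a set composition of $[n]$. Then $$\mathbf{F}_\Phi=\sum_{\Psi\text{ reforms }\Phi}\mathbf{M}_\Psi,$$ and hence $\{\mathbf{F}_\Phi\}$ (over all set compositions $\Phi$) is a basis of $\mathrm{NCQSym}(\mathbf{x})$.
   Context: A set composition $\Phi=(\Phi_1|\cdots|\Phi_k)$ of $[n]$ is an ordered list of disjoint nonempty sets with union $[n]$; blocks are written with elements in increasing order. $\Psi$ reforms $\Phi$ if $\Psi$ is obtained from $\Phi$ (written as a word with bars) by inserting some bars, the numbers remaining in the same order; e.g. $(1|3|2|4|56)$ reforms $(13|2|4|56)$ but $(3|1|2|4|56)$ does not. $\mathbf{M}_\Phi=\sum\mathbf{x}_{i_1}\cdots\mathbf{x}_{i_n}$ (noncommuting variables) over tuples with $i_j=i_\ell$ if $j,\ell$ are in the same block and $i_j<i_\ell$ if $j\in\Phi_p,\ell\in\Phi_q$, $p<q$. $\mathrm{NCQSym}(\mathbf{x})$ is the space of bounded-degree noncommutative series in which, for each set composition, all such monomials have equal coefficients. An edge-coloured digraph is a finite simple digraph with each edge dashed, solid ($\rightarrow$) or double ($\Rightarrow$); proper vertex-colourings $\kappa:V\to\mathbb{P}$ satisfy $\kappa(a)\ne\kappa(b)$, $\kappa(a)<\kappa(b)$, $\kappa(a)\le\kappa(b)$ for dashed, solid, double edges $(a,b)$. For a labelling bijection $L:V(G)\to[|V(G)|]$, $\mathscr{Y}_{(G,L)}(\mathbf{x})=\sum_\kappa\mathbf{x}_{\kappa(L^{-1}(1))}\cdots\mathbf{x}_{\kappa(L^{-1}(|V(G)|))}$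 over proper vertex-colourings. For a finite $A=\{a_1<\dots<a_m\}\subseteq\mathbb{P}$, $Q_A$ is the directed path $v_1\Rightarrow v_2\Rightarrow\cdots\Rightarrow v_m$ (double edges) with $v_i$ labelled $a_i$. The solid sum of two labelled digraphs is their disjoint union with a solid edge from every vertex of the first to every vertex of the second. Define $\mathbf{F}_\Phi=\mathscr{Y}_{(G,L)}(\mathbf{x})$ with $(G,L)=Q_{\Phi_1}$ solid-sum $Q_{\Phi_2}$ solid-sum $\cdots$ solid-sum $Q_{\Phi_k}$. *)

theory Defs
  imports Main "HOL.Vector_Spaces" "HOL-Library.Function_Algebras" "HOL-Library.FuncSet"
begin

(* Words over the alphabet of positive integers x_1, x_2, ... are nat lists
   (all letters > 0); a noncommutative series is its coefficient function. *)
type_synonym 'a ncseries = "nat list \<Rightarrow> 'a"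

definition set_comp :: "nat \<Rightarrow> nat set list \<Rightarrow> bool" where
  "set_comp n \<Phi> \<longleftrightarrow>
     (\<forall>B\<in>set \<Phi>. B \<noteq> {}) \<and>
     (\<forall>i<length \<Phi>. \<forall>j<length \<Phi>. i \<noteq> j \<longrightarrow> \<Phi>!i \<inter> \<Phi>!j = {}) \<and>
     \<Union>(set \<Phi>) = {1..n}"

definition all_set_comps :: "nat set list set" where
  "all_set_comps = {\<Phi>. \<exists>n. set_comp n \<Phi>}"

(* The word of a set composition (blocks written increasingly) and its bar positions
   (bar after the first b letters). *)
definition sc_word :: "nat set list \<Rightarrow> nat list" where
  "sc_word \<Phi> = concat (map sorted_list_of_set \<Phi>)"

definition sc_bars :: "nat set list \<Rightarrow> nat set" where
  "sc_bars \<Phi> = {(\<Sum>j<i. card (\<Phi>!j)) | i. i \<le> length \<Phi>}"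

(* \<Psi> reforms \<Phi>: obtained by inserting bars, letters staying in the same order. *)
definition reforms :: "nat set list \<Rightarrow> nat set list \<Rightarrow> bool" where
  "reforms \<Psi> \<Phi> \<longleftrightarrow> sc_word \<Psi> = sc_word \<Phi> \<and> sc_bars \<Phi> \<subseteq> sc_bars \<Psi>"

(* Monomial x_{i_1}...x_{i_n} (positions 1..n, list index j-1) belongs to M_\<Phi>. *)
definition M_matches :: "nat \<Rightarrow> nat set list \<Rightarrow> nat list \<Rightarrow> bool" where
  "M_matches n \<Phi> w \<longleftrightarrow> length w = n \<and> (\<forall>c\<in>set w. 0 < c) \<and>
     (\<forall>p<length \<Phi>. \<forall>j\<in>\<Phi>!p. \<forall>l\<in>\<Phi>!p. w!(j-1) = w!(l-1)) \<and>
     (\<forall>p<length \<Phi>. \<forall>q<length \<Phi>. p < q \<longrightarrow> (\<forall>j\<in>\<Phi>!p. \<forall>l\<in>\<Phi>!q. w!(j-1) < w!(l-1)))"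

definition Mbasis :: "nat \<Rightarrow> nat set list \<Rightarrow> 'a::field ncseries" where
  "Mbasis n \<Phi> = (\<lambda>w. if M_matches n \<Phi> w then 1 else 0)"

definition NCQSym :: "'a::field ncseries set" where
  "NCQSym = {f. (\<exists>d. \<forall>w. d < length w \<longrightarrow> f w = 0) \<and>
                (\<forall>w. 0 \<in> set w \<longrightarrow> f w = 0) \<and>
                (\<forall>n \<Phi> w w'. set_comp n \<Phi> \<longrightarrow> M_matches n \<Phi> w \<longrightarrow> M_matches n \<Phi> w'
                    \<longrightarrow> f w = f w')}"

record 'v ecdigraph =
  verts :: "'v set"
  dashed :: "('v \<times> 'v) set"
  solid :: "('v \<times> 'v) set"
  double :: "('v \<times> 'v) set"

definition proper_colouring :: "'v ecdigraph \<Rightarrow> ('v \<Rightarrow> nat) \<Rightarrow> bool" where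
  "proper_colouring G \<kappa> \<longleftrightarrow> (\<forall>v\<in>verts G. 0 < \<kappa> v) \<and>
     (\<forall>(a,b)\<in>dashed G. \<kappa> a \<noteq> \<kappa> b) \<and>
     (\<forall>(a,b)\<in>solid G. \<kappa> a < \<kappa> b) \<and>
     (\<forall>(a,b)\<in>double G. \<kappa> a \<le> \<kappa> b)"

(* Y_{(G,L)}: coefficient of a word = number of proper colourings \<kappa> : V \<rightarrow> P
   (as extensional functions on V) reading to that word via the labelling L. *)
definition Y :: "'v ecdigraph \<Rightarrow> ('v \<Rightarrow> nat) \<Rightarrow> 'a::field ncseries" where
  "Y G L = (\<lambda>w. of_nat (card {\<kappa>. \<kappa> \<in> extensional (verts G) \<and> proper_colouring G \<kappa> \<and>
        w = map (\<lambda>i. \<kappa> (inv_into (verts G) L i)) [1..<card (verts G) + 1]}))"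

(* Q_A: double-edge path a_1 \<Rightarrow> a_2 \<Rightarrow> ... \<Rightarrow> a_m; the vertex labelled a_i is a_i itself. *)
definition Q :: "nat set \<Rightarrow> nat ecdigraph" where
  "Q A = \<lparr> verts = A, dashed = {}, solid = {},
           double = {(a,b). a \<in> A \<and> b \<in> A \<and> a < b \<and> \<not>(\<exists>c\<in>A. a < c \<and> c < b)} \<rparr>"

(* Solid sum (of graphs with disjoint vertex sets, as for the Q_{\<Phi>_i}). *)
definition solid_sum :: "'v ecdigraph \<Rightarrow> 'v ecdigraph \<Rightarrow> 'v ecdigraph" where
  "solid_sum G H = \<lparr> verts = verts G \<union> verts H, dashed = dashed G \<union> dashed H,
      solid = solid G \<union> solid H \<union> (verts G \<times> verts H), double = double G \<union> double H \<rparr>"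

definition empty_ecdigraph :: "'v ecdigraph" where
  "empty_ecdigraph = \<lparr> verts = {}, dashed = {}, solid = {}, double = {} \<rparr>"

definition Fbasis :: "nat set list \<Rightarrow> 'a::field ncseries" where
  "Fbasis \<Phi> = Y (foldr solid_sum (map Q \<Phi>) empty_ecdigraph) id"

abbreviation ser_scale :: "'a::field \<Rightarrow> 'a ncseries \<Rightarrow> 'a ncseries" where
  "ser_scale c f \<equiv> (\<lambda>w. c * f w)"

end

theory Submission
  imports Defs
begin


definition bi :: "nat set list \<Rightarrow> nat \<Rightarrow> nat" where
  "bi \<Phi> j = (THE p. p < length \<Phi> \<and> j \<in> \<Phi>!p)"

lemma sc_disj: "set_comp n \<Phi> \<Longrightarrow> p < length \<Phi> \<Longrightarrow> q < length \<Phi> \<Longrightarrow> j \<in> \<Phi>!p \<Longrightarrow> j \<in> \<Phi>!q \<Longrightarrow> p = q"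
  unfolding set_comp_def by blast

lemma sc_cover: "set_comp n \<Phi> \<Longrightarrow> j \<in> {1..n} \<longleftrightarrow> (\<exists>p<length \<Phi>. j \<in> \<Phi>!p)"
  unfolding set_comp_def by (metis UnionE UnionI in_set_conv_nth)

lemma sc_sub: "set_comp n \<Phi> \<Longrightarrow> p < length \<Phi> \<Longrightarrow> j \<in> \<Phi>!p \<Longrightarrow> j \<in> {1..n}"
  using sc_cover by blast

lemma sc_ne: "set_comp n \<Phi> \<Longrightarrow> p < length \<Phi> \<Longrightarrow> \<Phi>!p \<noteq> {}"
  unfolding set_comp_def by auto

lemma bi_eq: "set_comp n \<Phi> \<Longrightarrow> p < length \<Phi> \<Longrightarrow> j \<in> \<Phi>!p \<Longrightarrow> bi \<Phi> j = p"
  unfolding bi_def by (rule the_equality) (auto dest: sc_disj)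

lemma bi_in: "set_comp n \<Phi> \<Longrightarrow> j \<in> {1..n} \<Longrightarrow> bi \<Phi> j < length \<Phi> \<and> j \<in> \<Phi>!(bi \<Phi> j)"
  using sc_cover bi_eq by metis

lemma sc_block: "set_comp n \<Phi> \<Longrightarrow> p < length \<Phi> \<Longrightarrow> \<Phi>!p = {j\<in>{1..n}. bi \<Phi> j = p}"
  using sc_sub bi_eq bi_in by blast

lemma sc_union: "set_comp n \<Phi> \<Longrightarrow> \<Union>(set \<Phi>) = {1..n}"
  unfolding set_comp_def by auto

lemma sc_distinct: "set_comp n \<Phi> \<Longrightarrow> distinct \<Phi>"
  unfolding distinct_conv_nth set_comp_def
  by (metis Int_absorb nth_mem)

lemma sc_finite: "finite {\<Phi>. set_comp n \<Phi>}"
proof -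
  have "set \<Phi> \<subseteq> Pow {1..n} \<and> length \<Phi> \<le> 2^n" if s: "set_comp n \<Phi>" for \<Phi>
  proof
    show "set \<Phi> \<subseteq> Pow {1..n}" using sc_union[OF s] by blast
    have "length \<Phi> = card (set \<Phi>)" using sc_distinct[OF s] distinct_card by metis
    also have "\<dots> \<le> card (Pow {1..n::nat})"
      by (rule card_mono) (use sc_union[OF s] in auto)
    finally show "length \<Phi> \<le> 2^n" by (simp add: card_Pow)
  qed
  hence "{\<Phi>. set_comp n \<Phi>} \<subseteq> {xs. set xs \<subseteq> Pow {1..n} \<and> length xs \<le> 2^n}" by blast
  thus ?thesis by (rule finite_subset) (intro finite_lists_length_le, simp)
qed

definition Mc :: "nat \<Rightarrow> nat set list \<Rightarrow> nat list \<Rightarrow> bool" where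
 "Mc n \<Psi> w \<longleftrightarrow> length w = n \<and> (\<forall>c\<in>set w. 0<c) \<and>
    (\<forall>j\<in>{1..n}. \<forall>l\<in>{1..n}. w!(j-1) < w!(l-1) \<longleftrightarrow> bi \<Psi> j < bi \<Psi> l)"

lemma M_matches_iff: assumes s: "set_comp n \<Psi>" shows "M_matches n \<Psi> w \<longleftrightarrow> Mc n \<Psi> w"
proof
  assume m: "M_matches n \<Psi> w"
  show "Mc n \<Psi> w" unfolding Mc_def
  proof (intro conjI ballI)
    show "length w = n" "\<And>c. c \<in> set w \<Longrightarrow> 0 < c" using m by (auto simp: M_matches_def)
    fix j l assume j: "j \<in> {1..n}" and l: "l \<in> {1..n}"
    note bj = bi_in[OF s j] and bl = bi_in[OF s l]
    have c1: "bi \<Psi> j < bi \<Psi> l \<Longrightarrow> w!(j-1) < w!(l-1)" using m bj bl unfolding M_matches_def by blast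
    have c2: "bi \<Psi> l < bi \<Psi> j \<Longrightarrow> w!(l-1) < w!(j-1)" using m bj bl unfolding M_matches_def by blast
    have c3: "bi \<Psi> j = bi \<Psi> l \<Longrightarrow> w!(j-1) = w!(l-1)" using m bj bl unfolding M_matches_def by metis
    show "w!(j-1) < w!(l-1) \<longleftrightarrow> bi \<Psi> j < bi \<Psi> l"
      using c1 c2 c3 by (metis less_asym linorder_neqE_nat order_less_irrefl)
  qed
next
  assume m: "Mc n \<Psi> w"
  show "M_matches n \<Psi> w" unfolding M_matches_def
  proof (intro conjI allI impI ballI)
    show "length w = n" "\<And>c. c \<in> set w \<Longrightarrow> 0 < c" using m by (auto simp: Mc_def)
  next
    fix p j l assume p: "p < length \<Psi>" and j: "j \<in> \<Psi>!p" and l: "l \<in> \<Psi>!p"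
    have "bi \<Psi> j = p" "bi \<Psi> l = p" using bi_eq[OF s p] j l by auto
    moreover have "j \<in> {1..n}" "l \<in> {1..n}" using sc_sub[OF s p] j l by auto
    ultimately show "w!(j-1) = w!(l-1)" using m unfolding Mc_def by (metis linorder_neqE_nat order_less_irrefl)
  next
    fix p q j l assume p: "p < length \<Psi>" and q: "q < length \<Psi>" and pq: "p < q" and j: "j \<in> \<Psi>!p" and l: "l \<in> \<Psi>!q"
    have "bi \<Psi> j = p" "bi \<Psi> l = q" using bi_eq[OF s] p q j l by auto
    moreover have "j \<in> {1..n}" "l \<in> {1..n}" using sc_sub[OF s] p q j l by auto
    ultimately show "w!(j-1) < w!(l-1)" using m pq unfolding Mc_def by auto
  qed
qed

definition Fc :: "nat \<Rightarrow> nat set list \<Rightarrow> nat list \<Rightarrow> bool" where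
 "Fc n \<Phi> w \<longleftrightarrow> length w = n \<and> (\<forall>c\<in>set w. 0<c) \<and>
   (\<forall>j\<in>{1..n}. \<forall>l\<in>{1..n}. (bi \<Phi> j < bi \<Phi> l \<longrightarrow> w!(j-1) < w!(l-1)) \<and>
      (bi \<Phi> j = bi \<Phi> l \<and> j < l \<longrightarrow> w!(j-1) \<le> w!(l-1)))"

definition refi :: "nat \<Rightarrow> nat set list \<Rightarrow> nat set list \<Rightarrow> bool" where
 "refi n \<Phi> \<Psi> \<longleftrightarrow> (\<forall>j\<in>{1..n}. \<forall>l\<in>{1..n}. (bi \<Phi> j < bi \<Phi> l \<longrightarrow> bi \<Psi> j < bi \<Psi> l) \<and>
      (bi \<Phi> j = bi \<Phi> l \<and> j < l \<longrightarrow> bi \<Psi> j \<le> bi \<Psi> l))"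

lemma Fc_Mc: assumes "Mc n \<Psi> w" shows "Fc n \<Phi> w \<longleftrightarrow> refi n \<Phi> \<Psi>"
proof -
  have a: "\<forall>j\<in>{1..n}. \<forall>l\<in>{1..n}. w!(j-1) < w!(l-1) \<longleftrightarrow> bi \<Psi> j < bi \<Psi> l" using assms by (simp add: Mc_def)
  have b: "\<forall>j\<in>{1..n}. \<forall>l\<in>{1..n}. w!(j-1) \<le> w!(l-1) \<longleftrightarrow> bi \<Psi> j \<le> bi \<Psi> l"
    using a by (metis not_less)
  show ?thesis using assms a b unfolding Fc_def refi_def Mc_def by auto
qed

lemma refi_refl: "refi n \<Phi> \<Phi>" by (auto simp: refi_def)

lemma refi_trans: assumes ab: "refi n A B" and bc: "refi n B C" shows "refi n A C"
  unfolding refi_def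
proof (intro ballI conjI impI)
  fix j l assume j: "j \<in> {1..n}" and l: "l \<in> {1..n}"
  show "bi A j < bi A l \<Longrightarrow> bi C j < bi C l" using ab bc j l unfolding refi_def by blast
  assume e: "bi A j = bi A l \<and> j < l"
  hence "bi B j \<le> bi B l" using ab j l unfolding refi_def by blast
  then consider "bi B j < bi B l" | "bi B j = bi B l" by linarith
  thus "bi C j \<le> bi C l"
  proof cases
    case 1 thus ?thesis using bc j l unfolding refi_def by fastforce
  next
    case 2 thus ?thesis using bc j l e unfolding refi_def by blast
  qed
qed

definition wt :: "nat set list \<Rightarrow> nat \<Rightarrow> nat list" where
  "wt \<Psi> n = map (\<lambda>j. Suc (bi \<Psi> j)) [1..<n+1]"

lemma wt_nth: "j \<in> {1..n} \<Longrightarrow> wt \<Psi> n ! (j-1) = Suc (bi \<Psi> j)"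
  by (auto simp: wt_def nth_map simp del: upt_Suc)

lemma Mc_wt: "Mc n \<Psi> (wt \<Psi> n)"
  unfolding Mc_def by (auto simp: wt_nth) (auto simp: wt_def simp del: upt_Suc)

definition lvl :: "nat \<Rightarrow> nat list \<Rightarrow> nat \<Rightarrow> nat set" where
  "lvl n w v = {j\<in>{1..n}. w!(j-1) = v}"

definition pack :: "nat \<Rightarrow> nat list \<Rightarrow> nat set list" where
  "pack n w = map (lvl n w) (sorted_list_of_set (set w))"

lemma pack_sc: assumes len: "length w = n" shows "set_comp n (pack n w)"
  unfolding set_comp_def
proof (intro conjI ballI allI impI)
  let ?vs = "sorted_list_of_set (set w)"
  have dvs: "distinct ?vs" by simp
  fix B assume "B \<in> set (pack n w)"
  then obtain v where v: "v \<in> set w" and B: "B = lvl n w v" by (auto simp: pack_def)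
  then obtain i where i: "i < n" "w!i = v" using len by (auto simp: in_set_conv_nth)
  hence "Suc i \<in> B" using B by (auto simp: lvl_def)
  thus "B \<noteq> {}" by auto
next
  let ?vs = "sorted_list_of_set (set w)"
  have dvs: "distinct ?vs" by simp
  fix i j assume i: "i < length (pack n w)" and j: "j < length (pack n w)" and ij: "i \<noteq> j"
  hence "?vs!i \<noteq> ?vs!j" using dvs by (simp add: pack_def nth_eq_iff_index_eq)
  thus "pack n w ! i \<inter> pack n w ! j = {}" using i j by (auto simp: pack_def lvl_def)
next
  show "\<Union>(set (pack n w)) = {1..n}"
  proof
    show "\<Union>(set (pack n w)) \<subseteq> {1..n}" by (auto simp: pack_def lvl_def)
    show "{1..n} \<subseteq> \<Union>(set (pack n w))"
    proof
      fix j assume j: "j \<in> {1..n}"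
      hence "w!(j-1) \<in> set w" using len by auto
      moreover have "j \<in> lvl n w (w!(j-1))" using j by (auto simp: lvl_def)
      ultimately show "j \<in> \<Union>(set (pack n w))" by (auto simp: pack_def)
    qed
  qed
qed

lemma pack_M: assumes len: "length w = n" and pos: "\<forall>c\<in>set w. 0<c" shows "M_matches n (pack n w) w"
  unfolding M_matches_def
proof (intro conjI allI impI ballI)
  let ?vs = "sorted_list_of_set (set w)"
  show "length w = n" by fact
  show "\<And>c. c \<in> set w \<Longrightarrow> 0 < c" using pos by auto
  show "\<And>p j l. p < length (pack n w) \<Longrightarrow> j \<in> pack n w ! p \<Longrightarrow> l \<in> pack n w ! p \<Longrightarrow> w!(j-1) = w!(l-1)"
    by (auto simp: pack_def lvl_def)
  fix p q j l assume p: "p < length (pack n w)" and q: "q < length (pack n w)" and pq: "p < q"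
    and j: "j \<in> pack n w ! p" and l: "l \<in> pack n w ! q"
  have "?vs!p < ?vs!q" using p q pq strict_sorted_list_of_set[of "set w"]
    by (simp add: pack_def sorted_wrt_iff_nth_less)
  thus "w!(j-1) < w!(l-1)" using p q j l by (auto simp: pack_def lvl_def)
qed

lemma pack_unique: assumes s: "set_comp n \<Psi>" and m: "Mc n \<Psi> w" shows "\<Psi> = pack n w"
proof -
  define k where "k = length \<Psi>"
  define rep where "rep p = (SOME j. j \<in> \<Psi>!p)" for p
  define val where "val p = w!(rep p - 1)" for p
  have rep: "p < k \<Longrightarrow> rep p \<in> \<Psi>!p" for p
    unfolding rep_def k_def using sc_ne[OF s] by (metis ex_in_conv someI)
  have rep1: "p < k \<Longrightarrow> rep p \<in> {1..n}" for p using rep sc_sub[OF s] k_def by auto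
  have brep: "p < k \<Longrightarrow> bi \<Psi> (rep p) = p" for p using rep bi_eq[OF s] k_def by auto
  have mc: "\<And>j l. j\<in>{1..n} \<Longrightarrow> l\<in>{1..n} \<Longrightarrow> w!(j-1) < w!(l-1) \<longleftrightarrow> bi \<Psi> j < bi \<Psi> l"
    using m by (simp add: Mc_def)
  have mce: "\<And>j l. j\<in>{1..n} \<Longrightarrow> l\<in>{1..n} \<Longrightarrow> w!(j-1) = w!(l-1) \<longleftrightarrow> bi \<Psi> j = bi \<Psi> l"
    using mc by (metis linorder_neqE_nat order_less_irrefl)
  have len: "length w = n" using m by (simp add: Mc_def)
  define vl where "vl = map val [0..<k]"
  have svl: "sorted_wrt (<) vl"
    unfolding sorted_wrt_iff_nth_less vl_def val_def
    using mc rep1 brep by auto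
  have setvl: "set vl = set w"
  proof
    show "set vl \<subseteq> set w" unfolding vl_def val_def
    proof (clarsimp)
      fix p assume "p < k"
      hence "rep p - 1 < length w" using rep1 len by fastforce
      thus "w ! (rep p - Suc 0) \<in> set w" by simp
    qed
    show "set w \<subseteq> set vl"
    proof
      fix x assume "x \<in> set w"
      then obtain i where i: "i < n" "x = w!i" using len by (auto simp: in_set_conv_nth)
      define j where "j = Suc i"
      have j: "j \<in> {1..n}" using i j_def by auto
      have bj: "bi \<Psi> j < k" using bi_in[OF s j] k_def by auto
      have "val (bi \<Psi> j) = w!(j-1)" unfolding val_def
        using mce[OF rep1[OF bj] j] brep[OF bj] by simp
      thus "x \<in> set vl" using bj i j_def unfolding vl_def by force
    qed
  qed
  have vl: "vl = sorted_list_of_set (set w)"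
    using strict_sorted_equal[OF strict_sorted_list_of_set svl] setvl by simp
  have blk: "p < k \<Longrightarrow> \<Psi>!p = lvl n w (val p)" for p
  proof
    assume p: "p < k"
    show "\<Psi>!p \<subseteq> lvl n w (val p)"
    proof
      fix j assume j: "j \<in> \<Psi>!p"
      have j1: "j \<in> {1..n}" using sc_sub[OF s] p j k_def by auto
      have "bi \<Psi> j = p" using bi_eq[OF s] p j k_def by auto
      thus "j \<in> lvl n w (val p)" using mce[OF j1 rep1[OF p]] brep[OF p] j1
        by (simp add: lvl_def val_def)
    qed
    show "lvl n w (val p) \<subseteq> \<Psi>!p"
    proof
      fix j assume "j \<in> lvl n w (val p)"
      hence j1: "j \<in> {1..n}" and e: "w!(j-1) = val p" by (auto simp: lvl_def)
      have "bi \<Psi> j = p" using mce[OF j1 rep1[OF p]] e brep[OF p] by (simp add: val_def)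
      thus "j \<in> \<Psi>!p" using bi_in[OF s j1] by simp
    qed
  qed
  show ?thesis
  proof (rule nth_equalityI)
    show "length \<Psi> = length (pack n w)" unfolding pack_def using vl[symmetric] by (simp add: vl_def k_def)
    fix p assume "p < length \<Psi>"
    thus "\<Psi>!p = pack n w ! p" unfolding pack_def using vl[symmetric] blk k_def
      by (simp add: vl_def)
  qed
qed

lemma Mc_unique: "set_comp n \<Psi> \<Longrightarrow> set_comp n \<Psi>' \<Longrightarrow> Mc n \<Psi> w \<Longrightarrow> Mc n \<Psi>' w \<Longrightarrow> \<Psi> = \<Psi>'"
  using pack_unique by metis



abbreviation GG :: "nat set list \<Rightarrow> nat ecdigraph" where
  "GG \<Phi> \<equiv> foldr solid_sum (map Q \<Phi>) empty_ecdigraph"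

lemma GG_verts: "verts (GG \<Phi>) = \<Union>(set \<Phi>)"
  by (induction \<Phi>) (auto simp: solid_sum_def empty_ecdigraph_def Q_def)

lemma GG_dashed: "dashed (GG \<Phi>) = {}"
  by (induction \<Phi>) (auto simp: solid_sum_def empty_ecdigraph_def Q_def)

lemma GG_solid: "solid (GG \<Phi>) = {(a,b). \<exists>p q. p < q \<and> q < length \<Phi> \<and> a \<in> \<Phi>!p \<and> b \<in> \<Phi>!q}"
proof (induction \<Phi>)
  case Nil thus ?case by (simp add: empty_ecdigraph_def)
next
  case (Cons B \<Phi>)
  have "solid (GG (B#\<Phi>)) = solid (GG \<Phi>) \<union> B \<times> \<Union>(set \<Phi>)"
    by (simp add: solid_sum_def Q_def GG_verts)
  also have "\<dots> = {(a,b). \<exists>p q. p < q \<and> q < length (B#\<Phi>) \<and> a \<in> (B#\<Phi>)!p \<and> b \<in> (B#\<Phi>)!q}"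
    (is "?L = ?R")
  proof
    show "?L \<subseteq> ?R"
    proof
      fix x assume "x \<in> ?L"
      obtain a b where x: "x = (a,b)" by (cases x)
      have "(a,b) \<in> solid (GG \<Phi>) \<or> (a \<in> B \<and> b \<in> \<Union>(set \<Phi>))" using \<open>x \<in> ?L\<close> x by auto
      thus "x \<in> ?R"
      proof (elim disjE conjE)
        assume "(a,b) \<in> solid (GG \<Phi>)"
        then obtain p q where "p < q" "q < length \<Phi>" "a \<in> \<Phi>!p" "b \<in> \<Phi>!q" using Cons.IH by auto
        hence "Suc p < Suc q" "Suc q < length (B#\<Phi>)" "a \<in> (B#\<Phi>)!Suc p" "b \<in> (B#\<Phi>)!Suc q" by auto
        thus ?thesis unfolding x mem_Collect_eq case_prod_conv by blast
      next
        assume "a \<in> B" "b \<in> \<Union>(set \<Phi>)"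
        then obtain q where "q < length \<Phi>" "b \<in> \<Phi>!q" by (auto simp: in_set_conv_nth)
        hence "0 < Suc q" "Suc q < length (B#\<Phi>)" "a \<in> (B#\<Phi>)!0" "b \<in> (B#\<Phi>)!Suc q" using \<open>a \<in> B\<close> by auto
        thus ?thesis unfolding x mem_Collect_eq case_prod_conv by blast
      qed
    qed
  next
    show "?R \<subseteq> ?L"
    proof
      fix x assume "x \<in> ?R"
      then obtain a b p q where x: "x = (a,b)" and pq: "p < q" "q < length (B#\<Phi>)" "a \<in> (B#\<Phi>)!p" "b \<in> (B#\<Phi>)!q"
        by blast
      then obtain q' where q': "q = Suc q'" by (cases q) auto
      have "(a,b) \<in> ?L"
      proof (cases p)
        case 0
        hence "a \<in> B" using pq by simp
        moreover have "b \<in> \<Union>(set \<Phi>)"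
        proof -
          have "b \<in> \<Phi>!q'" "q' < length \<Phi>" using pq q' by auto
          thus ?thesis using nth_mem by blast
        qed
        ultimately have "(a,b) \<in> B \<times> \<Union>(set \<Phi>)" by (rule SigmaI)
        thus ?thesis by (rule UnI2)
      next
        case (Suc p') thus ?thesis using pq q' Cons.IH by auto
      qed
      thus "x \<in> ?L" using x by simp
    qed
  qed
  finally show ?case .
qed

lemma GG_double: "double (GG \<Phi>) = {(a,b). \<exists>p<length \<Phi>. (a,b) \<in> double (Q (\<Phi>!p))}"
  by (induction \<Phi>) (auto simp: solid_sum_def empty_ecdigraph_def Ex_less_Suc2)

lemma chain:
  assumes h: "\<forall>a\<in>A. \<forall>b\<in>A. a<b \<and> \<not>(\<exists>c\<in>A. a<c \<and> c<b) \<longrightarrow> \<kappa> a \<le> (\<kappa> b::nat)"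
  shows "a\<in>A \<Longrightarrow> b\<in>A \<Longrightarrow> a<(b::nat) \<Longrightarrow> \<kappa> a \<le> \<kappa> b"
proof (induction "b - a" arbitrary: a b rule: less_induct)
  case less
  show ?case
  proof (cases "\<exists>c\<in>A. a<c \<and> c<b")
    case True
    then obtain c where c: "c \<in> A" "a < c" "c < b" by auto
    have "\<kappa> a \<le> \<kappa> c" using less.hyps[of c a] c less.prems by auto
    moreover have "\<kappa> c \<le> \<kappa> b" using less.hyps[of b c] c less.prems by auto
    ultimately show ?thesis by simp
  next
    case False thus ?thesis using h less.prems by blast
  qed
qed

lemma proper_iff: assumes s: "set_comp n \<Phi>"
  shows "proper_colouring (GG \<Phi>) \<kappa> \<longleftrightarrow> (\<forall>v\<in>{1..n}. 0<\<kappa> v) \<and>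
     (\<forall>j\<in>{1..n}. \<forall>l\<in>{1..n}. (bi \<Phi> j < bi \<Phi> l \<longrightarrow> \<kappa> j < \<kappa> l) \<and> (bi \<Phi> j = bi \<Phi> l \<and> j<l \<longrightarrow> \<kappa> j \<le> \<kappa> l))"
proof -
  have V: "verts (GG \<Phi>) = {1..n}" using GG_verts sc_union[OF s] by simp
  have S: "(a,b) \<in> solid (GG \<Phi>) \<longleftrightarrow> a \<in> {1..n} \<and> b \<in> {1..n} \<and> bi \<Phi> a < bi \<Phi> b" for a b
  proof
    assume "(a,b) \<in> solid (GG \<Phi>)"
    then obtain p q where "p < q" "q < length \<Phi>" "a \<in> \<Phi>!p" "b \<in> \<Phi>!q" using GG_solid by auto
    hence "a \<in> {1..n}" "b\<in>{1..n}" "bi \<Phi> a = p" "bi \<Phi> b = q"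
      using sc_sub[OF s, of p a] sc_sub[OF s, of q b] bi_eq[OF s, of p a] bi_eq[OF s, of q b] by auto
    thus "a \<in> {1..n} \<and> b \<in> {1..n} \<and> bi \<Phi> a < bi \<Phi> b" using \<open>p < q\<close> by auto
  next
    assume "a \<in> {1..n} \<and> b \<in> {1..n} \<and> bi \<Phi> a < bi \<Phi> b"
    thus "(a,b) \<in> solid (GG \<Phi>)" using bi_in[OF s] GG_solid by blast
  qed
  have D: "(a,b) \<in> double (GG \<Phi>) \<longleftrightarrow> (\<exists>p<length \<Phi>. a \<in> \<Phi>!p \<and> b \<in> \<Phi>!p \<and> a < b \<and> \<not>(\<exists>c\<in>\<Phi>!p. a < c \<and> c < b))" for a b
    by (simp add: GG_double Q_def)
  show ?thesis
  proof
    assume pc: "proper_colouring (GG \<Phi>) \<kappa>"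
    have pos: "\<forall>v\<in>{1..n}. 0<\<kappa> v" using pc V unfolding proper_colouring_def by blast
    have sol: "\<And>j l. (j,l) \<in> solid (GG \<Phi>) \<Longrightarrow> \<kappa> j < \<kappa> l" using pc by (auto simp: proper_colouring_def)
    have dbl: "\<And>j l. (j,l) \<in> double (GG \<Phi>) \<Longrightarrow> \<kappa> j \<le> \<kappa> l" using pc by (auto simp: proper_colouring_def)
    have "\<forall>j\<in>{1..n}. \<forall>l\<in>{1..n}. (bi \<Phi> j < bi \<Phi> l \<longrightarrow> \<kappa> j < \<kappa> l) \<and> (bi \<Phi> j = bi \<Phi> l \<and> j<l \<longrightarrow> \<kappa> j \<le> \<kappa> l)"
    proof (intro conjI ballI impI)
      fix j l assume j: "j \<in> {1..n}" and l: "l \<in> {1..n}"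
      show "bi \<Phi> j < bi \<Phi> l \<Longrightarrow> \<kappa> j < \<kappa> l" using sol S j l by blast
      assume e: "bi \<Phi> j = bi \<Phi> l \<and> j < l"
      define p where "p = bi \<Phi> j"
      have p: "p < length \<Phi>" "j \<in> \<Phi>!p" "l \<in> \<Phi>!p" using bi_in[OF s j] bi_in[OF s l] e p_def by auto
      have "\<forall>a\<in>\<Phi>!p. \<forall>b\<in>\<Phi>!p. a<b \<and> \<not>(\<exists>c\<in>\<Phi>!p. a<c \<and> c<b) \<longrightarrow> \<kappa> a \<le> \<kappa> b"
        using dbl D p(1) by blast
      from chain[OF this p(2,3)] e show "\<kappa> j \<le> \<kappa> l" by simp
    qed
    with pos show "(\<forall>v\<in>{1..n}. 0<\<kappa> v) \<and>
     (\<forall>j\<in>{1..n}. \<forall>l\<in>{1..n}. (bi \<Phi> j < bi \<Phi> l \<longrightarrow> \<kappa> j < \<kappa> l) \<and> (bi \<Phi> j = bi \<Phi> l \<and> j<l \<longrightarrow> \<kappa> j \<le> \<kappa> l))"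
      by (rule conjI)
  next
    assume r: "(\<forall>v\<in>{1..n}. 0<\<kappa> v) \<and>
     (\<forall>j\<in>{1..n}. \<forall>l\<in>{1..n}. (bi \<Phi> j < bi \<Phi> l \<longrightarrow> \<kappa> j < \<kappa> l) \<and> (bi \<Phi> j = bi \<Phi> l \<and> j<l \<longrightarrow> \<kappa> j \<le> \<kappa> l))"
    have dd: "\<kappa> a \<le> \<kappa> b" if dab: "(a,b) \<in> double (GG \<Phi>)" for a b
    proof -
      obtain p where p: "p<length \<Phi>" "a \<in> \<Phi>!p" "b \<in> \<Phi>!p" "a < b"
        using D[THEN iffD1, OF dab] by auto
      hence "a \<in> {1..n}" "b \<in> {1..n}" "bi \<Phi> a = bi \<Phi> b"
        using sc_sub[OF s, of p a] sc_sub[OF s, of p b] bi_eq[OF s, of p a] bi_eq[OF s, of p b] by auto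
      thus ?thesis using r \<open>a < b\<close> by blast
    qed
    show "proper_colouring (GG \<Phi>) \<kappa>" unfolding proper_colouring_def
      using r S dd V GG_dashed by auto
  qed
qed

lemma inv_id: "x \<in> A \<Longrightarrow> inv_into A id x = x"
  by (metis id_apply inj_on_id inv_into_f_f)

lemma Fbasis_Fc: assumes s: "set_comp n \<Phi>"
  shows "(Fbasis \<Phi> :: 'a::field ncseries) w = (if Fc n \<Phi> w then 1 else 0)"
proof -
  have V: "verts (GG \<Phi>) = {1..n}" using GG_verts sc_union[OF s] by simp
  define \<kappa>0 where "\<kappa>0 = restrict (\<lambda>j. w!(j-1)) {1..n}"
  have mapeq: "map (\<lambda>i. \<kappa> (inv_into {1..n} id i)) [1..<n + 1] = map \<kappa> [1..<n+1]" for \<kappa> :: "nat \<Rightarrow> nat"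
    by (rule map_cong) (auto simp: inv_id simp del: upt_Suc)
  have i: "(\<kappa> \<in> extensional {1..n} \<and> w = map \<kappa> [1..<n+1]) \<longleftrightarrow> (\<kappa> = \<kappa>0 \<and> length w = n)" for \<kappa>
  proof
    assume a: "\<kappa> \<in> extensional {1..n} \<and> w = map \<kappa> [1..<n+1]"
    hence len: "length w = n" by simp
    have "\<kappa> j = \<kappa>0 j" for j
    proof (cases "j \<in> {1..n}")
      case True
      hence "w!(j-1) = \<kappa> j" using a by (auto simp: nth_map simp del: upt_Suc)
      thus ?thesis using True by (simp add: \<kappa>0_def)
    next
      case False
      hence "\<kappa> j = undefined" using a unfolding extensional_def by blast
      thus ?thesis using False by (auto simp: \<kappa>0_def)
    qed
    thus "\<kappa> = \<kappa>0 \<and> length w = n" using len by auto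
  next
    assume a: "\<kappa> = \<kappa>0 \<and> length w = n"
    have "w = map \<kappa>0 [1..<n+1]"
      by (rule nth_equalityI) (use a in \<open>auto simp: \<kappa>0_def nth_map simp del: upt_Suc\<close>)
    thus "\<kappa> \<in> extensional {1..n} \<and> w = map \<kappa> [1..<n+1]" using a by (simp add: \<kappa>0_def)
  qed
  have ii: "length w = n \<Longrightarrow> proper_colouring (GG \<Phi>) \<kappa>0 \<longleftrightarrow> Fc n \<Phi> w"
  proof -
    assume len: "length w = n"
    have "(\<forall>v\<in>{1..n}. 0 < w!(v-1)) \<longleftrightarrow> (\<forall>c\<in>set w. 0<c)"
    proof
      assume a: "\<forall>v\<in>{1..n}. 0 < w!(v-1)"
      show "\<forall>c\<in>set w. 0<c"
      proof
        fix c assume "c \<in> set w"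
        then obtain i where i: "i < length w" "c = w!i" by (auto simp: in_set_conv_nth)
        hence "Suc i \<in> {1..n}" using len by auto
        thus "0 < c" using a i by fastforce
      qed
    next
      assume "\<forall>c\<in>set w. 0<c"
      thus "\<forall>v\<in>{1..n}. 0 < w!(v-1)" using len by auto
    qed
    thus ?thesis unfolding proper_iff[OF s] Fc_def using len by (simp add: \<kappa>0_def)
  qed
  have cV: "card {1..n::nat} = n" by simp
  have K: "{\<kappa>. \<kappa> \<in> extensional (verts (GG \<Phi>)) \<and> proper_colouring (GG \<Phi>) \<kappa> \<and>
        w = map (\<lambda>i. \<kappa> (inv_into (verts (GG \<Phi>)) id i)) [1..<card (verts (GG \<Phi>)) + 1]}
      = (if Fc n \<Phi> w then {\<kappa>0} else {})"
  proof -
    have e: "{\<kappa>. \<kappa> \<in> extensional (verts (GG \<Phi>)) \<and> proper_colouring (GG \<Phi>) \<kappa> \<and>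
        w = map (\<lambda>i. \<kappa> (inv_into (verts (GG \<Phi>)) id i)) [1..<card (verts (GG \<Phi>)) + 1]}
      = {\<kappa>. \<kappa> \<in> extensional {1..n} \<and> proper_colouring (GG \<Phi>) \<kappa> \<and> w = map \<kappa> [1..<n + 1]}"
      by (simp only: V cV mapeq)
    show ?thesis
    proof (cases "Fc n \<Phi> w")
      case True
      hence len: "length w = n" by (simp add: Fc_def)
      have "(\<kappa> \<in> extensional {1..n} \<and> proper_colouring (GG \<Phi>) \<kappa> \<and> w = map \<kappa> [1..<n + 1]) \<longleftrightarrow> \<kappa> = \<kappa>0" for \<kappa>
        using i[of \<kappa>] ii[OF len] True len by blast
      thus ?thesis unfolding e using True by auto
    next
      case False
      have "\<not> (\<kappa> \<in> extensional {1..n} \<and> proper_colouring (GG \<Phi>) \<kappa> \<and> w = map \<kappa> [1..<n + 1])" for \<kappa>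
        using i[of \<kappa>] ii False by blast
      thus ?thesis unfolding e using False by auto
    qed
  qed
  show ?thesis unfolding Fbasis_def Y_def K by simp
qed



definition kr :: "nat set list \<Rightarrow> nat \<Rightarrow> nat \<Rightarrow> bool" where
  "kr \<Phi> j l \<longleftrightarrow> bi \<Phi> j < bi \<Phi> l \<or> (bi \<Phi> j = bi \<Phi> l \<and> j < l)"

lemma kr_irrefl: "\<not> kr \<Phi> j j" by (simp add: kr_def)
lemma kr_asym: "kr \<Phi> j l \<Longrightarrow> \<not> kr \<Phi> l j" by (auto simp: kr_def)
lemma kr_total: "j \<noteq> l \<Longrightarrow> kr \<Phi> j l \<or> kr \<Phi> l j" by (auto simp: kr_def)
lemma kr_le: "kr \<Phi> j l \<Longrightarrow> bi \<Phi> j \<le> bi \<Phi> l" by (auto simp: kr_def)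

lemma sorted_wrt_concat_nth:
  assumes "\<forall>i<length xss. sorted_wrt R (xss!i)"
      and "\<forall>i j. i<j \<longrightarrow> j<length xss \<longrightarrow> (\<forall>a\<in>set(xss!i). \<forall>b\<in>set(xss!j). R a b)"
  shows "sorted_wrt R (concat xss)"
  using assms
proof (induction xss)
  case Nil then show ?case by simp
next
  case (Cons x xs)
  have IH: "sorted_wrt R (concat xs)"
  proof (rule Cons.IH)
    show "\<forall>i<length xs. sorted_wrt R (xs!i)" using Cons.prems(1) by auto
    show "\<forall>i j. i<j \<longrightarrow> j<length xs \<longrightarrow> (\<forall>a\<in>set(xs!i). \<forall>b\<in>set(xs!j). R a b)"
    proof (intro allI impI ballI)
      fix i j a b assume "i<j" "j<length xs" "a\<in>set(xs!i)" "b\<in>set(xs!j)"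
      thus "R a b" using Cons.prems(2)[rule_format, of "Suc i" "Suc j" a b] by simp
    qed
  qed
  have x: "sorted_wrt R x" using Cons.prems(1) by (metis length_Cons nth_Cons_0 zero_less_Suc)
  have xr: "\<forall>a\<in>set x. \<forall>b\<in>set (concat xs). R a b"
  proof (intro ballI)
    fix a b assume a: "a \<in> set x" and "b \<in> set (concat xs)"
    then obtain ys where ys: "ys \<in> set xs" "b \<in> set ys" by auto
    then obtain j where j0: "j < length xs" "xs!j = ys" by (auto simp: in_set_conv_nth)
    hence j: "j < length xs" "b \<in> set (xs!j)" using ys by auto
    show "R a b" using Cons.prems(2)[rule_format, of 0 "Suc j" a b] j a by simp
  qed
  show ?case using IH x xr by (simp add: sorted_wrt_append)
qed

lemma sorted_wrt_irrefl_distinct: "sorted_wrt R xs \<Longrightarrow> (\<And>x. \<not> R x x) \<Longrightarrow> distinct xs"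
  by (induction xs) auto

lemma sorted_wrt_unique:
  assumes "sorted_wrt R xs" "sorted_wrt R ys" "distinct xs" "distinct ys" "set xs = set ys"
     and asym: "\<And>x y. R x y \<Longrightarrow> \<not> R y x"
  shows "xs = ys"
  using assms(1-5)
proof (induction xs arbitrary: ys)
  case Nil thus ?case by simp
next
  case (Cons x xs)
  then obtain y ys' where ys: "ys = y # ys'" by (cases ys) auto
  have "x = y"
  proof (rule ccontr)
    assume xy: "x \<noteq> y"
    hence "y \<in> set xs" "x \<in> set ys'" using Cons.prems(5) ys by auto
    hence "R x y" "R y x" using Cons.prems(1,2) ys by auto
    thus False using asym by blast
  qed
  moreover have "xs = ys'"
  proof (rule Cons.IH)
    show "sorted_wrt R xs" "sorted_wrt R ys'" "distinct xs" "distinct ys'" using Cons.prems ys by auto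
    show "set xs = set ys'" using Cons.prems(3,4,5) ys \<open>x = y\<close>
      by (metis Diff_insert_absorb distinct.simps(2) list.simps(15))
  qed
  ultimately show ?case using ys by simp
qed

lemma sorted_same:
  assumes "sorted_wrt R u" "sorted_wrt S u" "distinct u" "x\<in>set u" "y\<in>set u" "R x y"
    and asym: "\<And>x y. R x y \<Longrightarrow> \<not> R y x"
  shows "S x y"
proof -
  have xy: "x \<noteq> y" using asym assms(6) by blast
  obtain a where a: "a < length u" "u!a = x" using assms(4) by (auto simp: in_set_conv_nth)
  obtain b where b: "b < length u" "u!b = y" using assms(5) by (auto simp: in_set_conv_nth)
  have "a \<noteq> b" using a b xy by auto
  then consider "a < b" | "b < a" by linarith
  thus ?thesis
  proof cases
    case 1 thus ?thesis using assms(2) a b by (metis sorted_wrt_nth_less)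
  next
    case 2 hence "R y x" using assms(1) a b by (metis sorted_wrt_nth_less)
    thus ?thesis using asym assms(6) by blast
  qed
qed

lemma word_props: assumes s: "set_comp n \<Phi>"
  shows "sorted_wrt (kr \<Phi>) (sc_word \<Phi>) \<and> distinct (sc_word \<Phi>) \<and> set (sc_word \<Phi>) = {1..n}"
proof -
  have fin: "p < length \<Phi> \<Longrightarrow> finite (\<Phi>!p)" for p
    using sc_sub[OF s] by (meson finite_atLeastAtMost finite_subset subsetI)
  have finB: "B \<in> set \<Phi> \<Longrightarrow> finite B" for B using fin by (auto simp: in_set_conv_nth)
  have sw: "sorted_wrt (kr \<Phi>) (sc_word \<Phi>)" unfolding sc_word_def
  proof (rule sorted_wrt_concat_nth)
    show "\<forall>i<length (map sorted_list_of_set \<Phi>). sorted_wrt (kr \<Phi>) (map sorted_list_of_set \<Phi> ! i)"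
    proof (intro allI impI)
      fix i assume "i < length (map sorted_list_of_set \<Phi>)"
      hence i: "i < length \<Phi>" by simp
      have "sorted_wrt (<) (sorted_list_of_set (\<Phi>!i))" by (rule strict_sorted_list_of_set)
      hence "sorted_wrt (kr \<Phi>) (sorted_list_of_set (\<Phi>!i))"
      proof (rule sorted_wrt_mono_rel[rotated])
        fix x y assume "x \<in> set (sorted_list_of_set (\<Phi>!i))" "y \<in> set (sorted_list_of_set (\<Phi>!i))" "x < y"
        hence "x \<in> \<Phi>!i" "y \<in> \<Phi>!i" "x < y" using fin[OF i] by auto
        thus "kr \<Phi> x y" using bi_eq[OF s i] by (simp add: kr_def)
      qed
      thus "sorted_wrt (kr \<Phi>) (map sorted_list_of_set \<Phi> ! i)" using i by simp
    qed
    show "\<forall>i j. i<j \<longrightarrow> j<length (map sorted_list_of_set \<Phi>) \<longrightarrow>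
       (\<forall>a\<in>set(map sorted_list_of_set \<Phi>!i). \<forall>b\<in>set(map sorted_list_of_set \<Phi>!j). kr \<Phi> a b)"
    proof (intro allI impI ballI)
      fix i j a b assume ij: "i<j" "j<length (map sorted_list_of_set \<Phi>)"
        and a: "a\<in>set(map sorted_list_of_set \<Phi>!i)" and b: "b\<in>set(map sorted_list_of_set \<Phi>!j)"
      have i: "i < length \<Phi>" "j < length \<Phi>" using ij by auto
      have "a \<in> \<Phi>!i" "b \<in> \<Phi>!j" using a b i fin by auto
      hence "bi \<Phi> a = i" "bi \<Phi> b = j" using bi_eq[OF s, of i a] bi_eq[OF s, of j b] i by auto
      thus "kr \<Phi> a b" using ij by (simp add: kr_def)
    qed
  qed
  moreover have "distinct (sc_word \<Phi>)" using sw sorted_wrt_irrefl_distinct kr_irrefl by metis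
  moreover have "set (sc_word \<Phi>) = {1..n}"
    unfolding sc_word_def using finB sc_union[OF s] by auto
  ultimately show ?thesis by blast
qed

definition DD :: "nat set list \<Rightarrow> nat \<Rightarrow> nat \<Rightarrow> nat set" where
  "DD \<Phi> n i = {j\<in>{1..n}. bi \<Phi> j < i}"

lemma bars_eq: assumes s: "set_comp n \<Phi>"
  shows "sc_bars \<Phi> = {card (DD \<Phi> n i) | i. i \<le> length \<Phi>}"
proof -
  have fin: "p < length \<Phi> \<Longrightarrow> finite (\<Phi>!p)" for p
    using sc_sub[OF s] by (meson finite_atLeastAtMost finite_subset subsetI)
  have "(\<Sum>j<i. card (\<Phi>!j)) = card (DD \<Phi> n i)" if i: "i \<le> length \<Phi>" for i
  proof -
    have "DD \<Phi> n i = (\<Union>p\<in>{..<i}. \<Phi>!p)"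
    proof
      show "DD \<Phi> n i \<subseteq> (\<Union>p\<in>{..<i}. \<Phi>!p)" using bi_in[OF s] by (auto simp: DD_def)
      show "(\<Union>p\<in>{..<i}. \<Phi>!p) \<subseteq> DD \<Phi> n i"
      proof
        fix j assume "j \<in> (\<Union>p\<in>{..<i}. \<Phi>!p)"
        then obtain p where p: "p < i" "j \<in> \<Phi>!p" by auto
        hence "p < length \<Phi>" using i by auto
        thus "j \<in> DD \<Phi> n i" using p sc_sub[OF s] bi_eq[OF s] by (auto simp: DD_def)
      qed
    qed
    also have "card \<dots> = (\<Sum>p<i. card (\<Phi>!p))"
    proof (rule card_UN_disjoint)
      show "finite {..<i}" by simp
      show "\<forall>p\<in>{..<i}. finite (\<Phi>!p)" using fin i by auto
      show "\<forall>p\<in>{..<i}. \<forall>q\<in>{..<i}. p \<noteq> q \<longrightarrow> \<Phi>!p \<inter> \<Phi>!q = {}"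
        using s i unfolding set_comp_def by auto
    qed
    finally show ?thesis by simp
  qed
  thus ?thesis unfolding sc_bars_def by force
qed

lemma DD_all: "set_comp n \<Phi> \<Longrightarrow> DD \<Phi> n (length \<Phi>) = {1..n}"
  using bi_in by (auto simp: DD_def)

lemma reforms_iff: assumes s: "set_comp n \<Phi>" and t: "set_comp n \<Psi>"
  shows "reforms \<Psi> \<Phi> \<longleftrightarrow> refi n \<Phi> \<Psi>"
proof
  assume r: "reforms \<Psi> \<Phi>"
  have we: "sc_word \<Psi> = sc_word \<Phi>" and bs: "sc_bars \<Phi> \<subseteq> sc_bars \<Psi>" using r by (auto simp: reforms_def)
  note wp = word_props[OF s] and wq = word_props[OF t]
  have ord: "kr \<Psi> j l" if "j\<in>{1..n}" "l\<in>{1..n}" "kr \<Phi> j l" for j l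
    using sorted_same[of "kr \<Phi>" "sc_word \<Phi>" "kr \<Psi>" j l] wp wq we that kr_asym by metis
  show "refi n \<Phi> \<Psi>" unfolding refi_def
  proof (intro ballI conjI impI)
    fix j l assume j: "j\<in>{1..n}" and l: "l\<in>{1..n}"
    show "bi \<Psi> j \<le> bi \<Psi> l" if "bi \<Phi> j = bi \<Phi> l \<and> j < l"
      using ord[OF j l] that kr_le by (simp add: kr_def)
    assume jl: "bi \<Phi> j < bi \<Phi> l"
    define i where "i = Suc (bi \<Phi> j)"
    have "i \<le> length \<Phi>" using bi_in[OF s j] i_def by simp
    hence "card (DD \<Phi> n i) \<in> sc_bars \<Phi>" using bars_eq[OF s] by auto
    hence "card (DD \<Phi> n i) \<in> sc_bars \<Psi>" using bs by auto
    then obtain i' where i': "i' \<le> length \<Psi>" "card (DD \<Phi> n i) = card (DD \<Psi> n i')"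
      using bars_eq[OF t] by auto
    have nest: "DD \<Phi> n i \<subseteq> DD \<Psi> n i' \<or> DD \<Psi> n i' \<subseteq> DD \<Phi> n i"
    proof (rule ccontr)
      assume "\<not> ?thesis"
      then obtain a b where a: "a \<in> DD \<Phi> n i" "a \<notin> DD \<Psi> n i'" and b: "b \<in> DD \<Psi> n i'" "b \<notin> DD \<Phi> n i"
        by blast
      have ab: "a \<in> {1..n}" "b \<in> {1..n}" "a \<noteq> b" using a b by (auto simp: DD_def)
      from kr_total[OF ab(3)] show False
      proof
        assume "kr \<Phi> a b"
        hence "bi \<Psi> a \<le> bi \<Psi> b" using ord ab kr_le by blast
        thus False using a b ab by (auto simp: DD_def)
      next
        assume "kr \<Phi> b a"
        hence "bi \<Phi> b \<le> bi \<Phi> a" using kr_le by blast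
        thus False using a b ab by (auto simp: DD_def)
      qed
    qed
    have fins: "finite (DD \<Phi> n i)" "finite (DD \<Psi> n i')" by (auto simp: DD_def)
    have eq: "DD \<Phi> n i = DD \<Psi> n i'"
      using nest fins i'(2) card_subset_eq by metis
    have "j \<in> DD \<Phi> n i" "l \<notin> DD \<Phi> n i" using j jl i_def by (auto simp: DD_def)
    hence "j \<in> DD \<Psi> n i'" "l \<notin> DD \<Psi> n i'" using eq by auto
    thus "bi \<Psi> j < bi \<Psi> l" using j l by (auto simp: DD_def)
  qed
next
  assume rf: "refi n \<Phi> \<Psi>"
  note wp = word_props[OF s] and wq = word_props[OF t]
  have ord: "kr \<Psi> j l" if j: "j\<in>{1..n}" and l: "l\<in>{1..n}" and k: "kr \<Phi> j l" for j l
  proof (cases "bi \<Phi> j < bi \<Phi> l")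
    case True thus ?thesis using rf j l by (simp add: refi_def kr_def)
  next
    case False
    hence "bi \<Phi> j = bi \<Phi> l" "j < l" using k by (auto simp: kr_def)
    hence "bi \<Psi> j \<le> bi \<Psi> l" using rf j l by (simp add: refi_def)
    thus ?thesis using \<open>j < l\<close> by (auto simp: kr_def)
  qed
  have sw: "sorted_wrt (kr \<Psi>) (sc_word \<Phi>)"
    using sorted_wrt_mono_rel[of "sc_word \<Phi>" "kr \<Phi>" "kr \<Psi>"] wp ord by blast
  have we: "sc_word \<Psi> = sc_word \<Phi>"
    using sorted_wrt_unique[of "kr \<Psi>" "sc_word \<Psi>" "sc_word \<Phi>"] sw wp wq kr_asym by metis
  have bs: "sc_bars \<Phi> \<subseteq> sc_bars \<Psi>"
  proof
    fix x assume "x \<in> sc_bars \<Phi>"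
    then obtain i where i: "i \<le> length \<Phi>" "x = card (DD \<Phi> n i)" using bars_eq[OF s] by auto
    define L where "L = {l\<in>{1..n}. i \<le> bi \<Phi> l}"
    have "\<exists>i'\<le>length \<Psi>. DD \<Phi> n i = DD \<Psi> n i'"
    proof (cases "L = {}")
      case True
      hence "DD \<Phi> n i = {1..n}" by (auto simp: L_def DD_def)
      thus ?thesis using DD_all[OF t] by auto
    next
      case False
      have finL: "finite (bi \<Psi> ` L)" by (auto simp: L_def)
      define i' where "i' = Min (bi \<Psi> ` L)"
      have "i' \<in> bi \<Psi> ` L" using Min_in finL False i'_def by auto
      then obtain l0 where l0: "l0 \<in> L" "i' = bi \<Psi> l0" by auto
      have l0n: "l0 \<in> {1..n}" "i \<le> bi \<Phi> l0" using l0 by (auto simp: L_def)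
      have "i' < length \<Psi>" using l0 bi_in[OF t l0n(1)] by simp
      moreover have "DD \<Phi> n i = DD \<Psi> n i'"
      proof (rule set_eqI)
        fix j
        show "j \<in> DD \<Phi> n i \<longleftrightarrow> j \<in> DD \<Psi> n i'"
        proof (cases "j \<in> {1..n}")
          case False thus ?thesis by (auto simp: DD_def)
        next
          case j: True
          show ?thesis
          proof (cases "bi \<Phi> j < i")
            case True
            hence "bi \<Phi> j < bi \<Phi> l0" using l0n by simp
            hence "bi \<Psi> j < i'" using rf j l0n l0 by (simp add: refi_def)
            thus ?thesis using True j by (simp add: DD_def)
          next
            case False
            hence "j \<in> L" using j by (simp add: L_def)
            hence "i' \<le> bi \<Psi> j" using finL i'_def by simp
            thus ?thesis using False j by (simp add: DD_def)
          qed
        qed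
      qed
      ultimately show ?thesis using less_imp_le by blast
    qed
    then obtain i' where "i' \<le> length \<Psi>" "DD \<Phi> n i = DD \<Psi> n i'" by blast
    thus "x \<in> sc_bars \<Psi>" using i bars_eq[OF t] by auto
  qed
  show "reforms \<Psi> \<Phi>" using we bs by (simp add: reforms_def)
qed



lemma Mbasis_Mc: "set_comp n \<Psi> \<Longrightarrow> (Mbasis n \<Psi> :: 'a::field ncseries) w = (if Mc n \<Psi> w then 1 else 0)"
  by (simp add: Mbasis_def M_matches_iff)

lemma sum_apply_fun: "(\<Sum>x\<in>A. f x) w = (\<Sum>x\<in>A. f x w)"
  by (induction A rule: infinite_finite_induct) auto

lemma part1: assumes s: "set_comp n \<Phi>"
  shows "(Fbasis \<Phi> :: 'a::field ncseries) w = (\<Sum>\<Psi> | set_comp n \<Psi> \<and> reforms \<Psi> \<Phi>. Mbasis n \<Psi> w)"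
proof -
  let ?S = "{\<Psi>. set_comp n \<Psi> \<and> reforms \<Psi> \<Phi>}"
  have finS: "finite ?S" by (rule finite_subset[OF _ sc_finite[of n]]) auto
  show ?thesis
  proof (cases "Fc n \<Phi> w")
    case True
    hence len: "length w = n" and pos: "\<forall>c\<in>set w. 0<c" by (auto simp: Fc_def)
    define \<Psi>0 where "\<Psi>0 = pack n w"
    have t0: "set_comp n \<Psi>0" using pack_sc[OF len] \<Psi>0_def by simp
    have m0: "Mc n \<Psi>0 w" using pack_M[OF len pos] M_matches_iff[OF t0] \<Psi>0_def by simp
    have r0: "reforms \<Psi>0 \<Phi>" using reforms_iff[OF s t0] Fc_Mc[OF m0] True by simp
    have "(\<Sum>\<Psi>\<in>?S. (Mbasis n \<Psi> w :: 'a)) = (\<Sum>\<Psi>\<in>?S. if \<Psi> = \<Psi>0 then 1 else 0)"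
    proof (rule sum.cong[OF refl])
      fix \<Psi> assume "\<Psi> \<in> ?S"
      hence t: "set_comp n \<Psi>" by simp
      show "(Mbasis n \<Psi> w :: 'a) = (if \<Psi> = \<Psi>0 then 1 else 0)"
      proof (cases "\<Psi> = \<Psi>0")
        case True thus ?thesis using Mbasis_Mc[OF t0, of w] m0 by simp
      next
        case False hence "\<not> Mc n \<Psi> w" using Mc_unique[OF t t0 _ m0] by blast
        thus ?thesis using Mbasis_Mc[OF t, of w] False by simp
      qed
    qed
    also have "\<dots> = 1" using finS t0 r0 by simp
    finally show ?thesis using True by (simp add: Fbasis_Fc[OF s])
  next
    case False
    have "(\<Sum>\<Psi>\<in>?S. (Mbasis n \<Psi> w :: 'a)) = 0"
    proof (rule sum.neutral, rule ballI)
      fix \<Psi> assume "\<Psi> \<in> ?S"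
      hence t: "set_comp n \<Psi>" and r: "reforms \<Psi> \<Phi>" by auto
      show "(Mbasis n \<Psi> w :: 'a) = 0"
      proof (rule ccontr)
        assume "(Mbasis n \<Psi> w :: 'a) \<noteq> 0"
        hence "Mc n \<Psi> w" by (simp add: Mbasis_Mc[OF t] split: if_splits)
        hence "Fc n \<Phi> w" using Fc_Mc reforms_iff[OF s t] r by simp
        with False show False ..
      qed
    qed
    thus ?thesis using False by (simp add: Fbasis_Fc[OF s])
  qed
qed

lemma length_wt[simp]: "length (wt \<Phi> n) = n" by (simp add: wt_def)

lemma Fc_self: "Fc n \<Phi> (wt \<Phi> n)" using Fc_Mc[OF Mc_wt] refi_refl by blast

lemma refi_antisym: assumes s: "set_comp n \<Phi>" and t: "set_comp n \<Psi>" and r1: "refi n \<Phi> \<Psi>" and r2: "refi n \<Psi> \<Phi>"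
  shows "\<Phi> = \<Psi>"
proof -
  have m: "Mc n \<Phi> (wt \<Phi> n)" by (rule Mc_wt)
  have "Mc n \<Psi> (wt \<Phi> n)" unfolding Mc_def
  proof (intro conjI ballI)
    show "length (wt \<Phi> n) = n" "\<And>c. c \<in> set (wt \<Phi> n) \<Longrightarrow> 0 < c" using m by (auto simp: Mc_def)
    fix j l assume j: "j \<in> {1..n}" and l: "l \<in> {1..n}"
    have "wt \<Phi> n ! (j-1) < wt \<Phi> n ! (l-1) \<longleftrightarrow> bi \<Phi> j < bi \<Phi> l" using m j l by (simp add: Mc_def)
    also have "\<dots> \<longleftrightarrow> bi \<Psi> j < bi \<Psi> l" using r1 r2 j l by (auto simp: refi_def)
    finally show "wt \<Phi> n ! (j-1) < wt \<Phi> n ! (l-1) \<longleftrightarrow> bi \<Psi> j < bi \<Psi> l" .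
  qed
  thus ?thesis using Mc_unique[OF s t m] by simp
qed

lemma Fbasis_self: "set_comp n \<Phi> \<Longrightarrow> (Fbasis \<Phi> :: 'a::field ncseries) (wt \<Phi> n) = 1"
  by (simp add: Fbasis_Fc Fc_self)

lemma Fbasis_nz: assumes t: "set_comp m \<Psi>" and s: "set_comp n \<Phi>"
  and nz: "(Fbasis \<Psi> :: 'a::field ncseries) (wt \<Phi> n) \<noteq> 0"
  shows "m = n \<and> refi n \<Psi> \<Phi>"
proof -
  have "Fc m \<Psi> (wt \<Phi> n)" using nz by (simp add: Fbasis_Fc[OF t] split: if_splits)
  moreover hence "m = n" by (simp add: Fc_def)
  ultimately show ?thesis using Fc_Mc[OF Mc_wt] by simp
qed

lemma Fbasis_inj: "inj_on (Fbasis :: nat set list \<Rightarrow> 'a::field ncseries) all_set_comps"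
proof (rule inj_onI)
  fix \<Phi> \<Psi> assume "\<Phi> \<in> all_set_comps" "\<Psi> \<in> all_set_comps" and eq: "(Fbasis \<Phi> :: 'a ncseries) = Fbasis \<Psi>"
  then obtain n m where s: "set_comp n \<Phi>" and t: "set_comp m \<Psi>" by (auto simp: all_set_comps_def)
  have "(Fbasis \<Psi> :: 'a ncseries) (wt \<Phi> n) \<noteq> 0" using Fbasis_self[OF s] eq by (metis one_neq_zero)
  from Fbasis_nz[OF t s this] have mn: "m = n" and r1: "refi n \<Psi> \<Phi>" by auto
  have "(Fbasis \<Phi> :: 'a ncseries) (wt \<Psi> m) \<noteq> 0" using Fbasis_self[OF t] eq by (metis one_neq_zero)
  from Fbasis_nz[OF s t this] have r2: "refi n \<Phi> \<Psi>" using mn by auto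
  show "\<Phi> = \<Psi>" using refi_antisym[OF s] t mn r1 r2 by simp
qed

lemma Fbasis_NCQ: assumes s: "set_comp n \<Phi>" shows "(Fbasis \<Phi> :: 'a::field ncseries) \<in> NCQSym"
  unfolding NCQSym_def
proof (intro CollectI conjI allI impI)
  show "\<exists>d. \<forall>w. d < length w \<longrightarrow> (Fbasis \<Phi> :: 'a ncseries) w = 0"
    by (rule exI[of _ n]) (auto simp: Fbasis_Fc[OF s] Fc_def)
  show "\<And>w. 0 \<in> set w \<Longrightarrow> (Fbasis \<Phi> :: 'a ncseries) w = 0"
    by (auto simp: Fbasis_Fc[OF s] Fc_def)
  fix m \<Psi> w w' assume t: "set_comp m \<Psi>" and mw: "M_matches m \<Psi> w" and mw': "M_matches m \<Psi> w'"
  have a: "Mc m \<Psi> w" "Mc m \<Psi> w'" using mw mw' M_matches_iff[OF t] by auto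
  have "Fc n \<Phi> w \<longleftrightarrow> Fc n \<Phi> w'"
  proof (cases "m = n")
    case True thus ?thesis using Fc_Mc a by simp
  next
    case False thus ?thesis using a by (auto simp: Fc_def Mc_def)
  qed
  thus "(Fbasis \<Phi> :: 'a ncseries) w = Fbasis \<Phi> w'" by (simp add: Fbasis_Fc[OF s])
qed

definition mu :: "nat set list \<Rightarrow> nat" where
  "mu \<Phi> = card {(j,l). j \<in> \<Union>(set \<Phi>) \<and> l \<in> \<Union>(set \<Phi>) \<and> bi \<Phi> j < bi \<Phi> l}"

lemma mu_eq: "set_comp n \<Phi> \<Longrightarrow> mu \<Phi> = card {(j,l). j \<in> {1..n} \<and> l \<in> {1..n} \<and> bi \<Phi> j < bi \<Phi> l}"
  by (simp add: mu_def sc_union)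

lemma mu_le: assumes s: "set_comp n \<Phi>" shows "mu \<Phi> \<le> n*n"
proof -
  have "mu \<Phi> \<le> card ({1..n} \<times> {1..n})" unfolding mu_eq[OF s] by (rule card_mono) auto
  thus ?thesis by simp
qed

lemma mu_less: assumes s: "set_comp n \<Phi>" and t: "set_comp n \<Psi>" and r: "refi n \<Phi> \<Psi>" and ne: "\<Phi> \<noteq> \<Psi>"
  shows "mu \<Phi> < mu \<Psi>"
proof -
  define P where "P X = {(j,l). j \<in> {1..n} \<and> l \<in> {1..n} \<and> bi X j < bi X l}" for X
  have sub: "P \<Phi> \<subseteq> P \<Psi>" using r by (auto simp: P_def refi_def)
  have "P \<Phi> \<noteq> P \<Psi>"
  proof
    assume eq: "P \<Phi> = P \<Psi>"
    have "refi n \<Psi> \<Phi>" unfolding refi_def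
    proof (intro ballI conjI impI)
      fix j l assume j: "j \<in> {1..n}" and l: "l \<in> {1..n}"
      show "bi \<Psi> j < bi \<Psi> l \<Longrightarrow> bi \<Phi> j < bi \<Phi> l" using eq j l unfolding P_def by blast
      assume "bi \<Psi> j = bi \<Psi> l \<and> j < l"
      thus "bi \<Phi> j \<le> bi \<Phi> l" using r j l unfolding refi_def by (metis not_le order_less_irrefl)
    qed
    thus False using refi_antisym[OF s t r] ne by simp
  qed
  hence "P \<Phi> \<subset> P \<Psi>" using sub by blast
  moreover have "finite (P \<Psi>)" by (rule finite_subset[of _ "{1..n} \<times> {1..n}"]) (auto simp: P_def)
  ultimately have "card (P \<Phi>) < card (P \<Psi>)" by (rule psubset_card_mono[rotated])
  thus ?thesis using mu_eq[OF s] mu_eq[OF t] by (simp add: P_def)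
qed



interpretation FM: module "ser_scale :: 'a::field \<Rightarrow> 'a ncseries \<Rightarrow> 'a ncseries"
  by unfold_locales (auto simp: fun_eq_iff algebra_simps)

lemma Findep: "FM.independent (Fbasis ` all_set_comps :: 'a::field ncseries set)"
proof
  assume "FM.dependent (Fbasis ` all_set_comps :: 'a ncseries set)"
  then obtain T u where T: "finite T" "T \<subseteq> (Fbasis ` all_set_comps :: 'a ncseries set)"
    and sum0: "(\<Sum>v\<in>T. ser_scale (u v) v) = 0" and ex: "\<exists>v\<in>T. u v \<noteq> 0"
    unfolding FM.dependent_explicit by blast
  define S where "S = {\<Phi> \<in> all_set_comps. (Fbasis \<Phi> :: 'a ncseries) \<in> T \<and> u (Fbasis \<Phi>) \<noteq> 0}"
  have "inj_on (Fbasis :: nat set list \<Rightarrow> 'a ncseries) S"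
    using Fbasis_inj by (rule inj_on_subset) (auto simp: S_def)
  moreover have "finite ((Fbasis :: nat set list \<Rightarrow> 'a ncseries) ` S)"
    using T(1) by (rule finite_subset[rotated]) (auto simp: S_def)
  ultimately have finS: "finite S" using finite_image_iff by blast
  have "S \<noteq> {}" using ex T(2) by (auto simp: S_def)
  define m where "m = Min (mu ` S)"
  have "m \<in> mu ` S" using finS \<open>S \<noteq> {}\<close> m_def by simp
  then obtain \<Phi> where \<Phi>: "\<Phi> \<in> S" "mu \<Phi> = m" by auto
  have minm: "\<Psi> \<in> S \<Longrightarrow> mu \<Phi> \<le> mu \<Psi>" for \<Psi> using finS \<Phi> m_def by simp
  obtain n where s: "set_comp n \<Phi>" using \<Phi> by (auto simp: S_def all_set_comps_def)
  define w where "w = wt \<Phi> n"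
  have FT: "(Fbasis \<Phi> :: 'a ncseries) \<in> T" and uF: "u (Fbasis \<Phi>) \<noteq> 0" using \<Phi> by (auto simp: S_def)
  have terms: "u v * v w = (if v = Fbasis \<Phi> then u v else 0)" if v: "v \<in> T" for v
  proof -
    obtain \<Psi> where \<Psi>: "\<Psi> \<in> all_set_comps" "v = Fbasis \<Psi>" using v T(2) by auto
    then obtain k where t: "set_comp k \<Psi>" by (auto simp: all_set_comps_def)
    show ?thesis
    proof (cases "v = Fbasis \<Phi>")
      case True thus ?thesis using Fbasis_self[OF s, where 'a='a] w_def by simp
    next
      case False
      have "u v * v w = 0"
      proof (cases "u v = 0")
        case False': False
        hence "\<Psi> \<in> S" using \<Psi> v by (auto simp: S_def)
        have "v w = 0"
        proof (rule ccontr)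
          assume "v w \<noteq> 0"
          hence "(Fbasis \<Psi> :: 'a ncseries) (wt \<Phi> n) \<noteq> 0" using \<Psi> w_def by simp
          from Fbasis_nz[OF t s this] have "k = n" "refi n \<Psi> \<Phi>" by auto
          moreover have "\<Psi> \<noteq> \<Phi>" using False \<Psi> by auto
          ultimately have "mu \<Psi> < mu \<Phi>" using mu_less[of n \<Psi> \<Phi>] t s by simp
          thus False using minm[OF \<open>\<Psi> \<in> S\<close>] by simp
        qed
        thus ?thesis by simp
      qed simp
      thus ?thesis using False by simp
    qed
  qed
  have "0 = (\<Sum>v\<in>T. ser_scale (u v) v) w" using sum0 by simp
  also have "\<dots> = (\<Sum>v\<in>T. u v * v w)" by (simp add: sum_apply_fun)
  also have "\<dots> = (\<Sum>v\<in>T. if v = Fbasis \<Phi> then u v else 0)" using terms by (rule sum.cong[OF refl])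
  also have "\<dots> = u (Fbasis \<Phi>)" using T(1) FT by simp
  finally show False using uF by simp
qed

lemma NCQ_D1: "f \<in> NCQSym \<Longrightarrow> \<exists>d. \<forall>w. d < length w \<longrightarrow> f w = 0"
  unfolding NCQSym_def mem_Collect_eq by (rule conjunct1)
lemma NCQ_D2: assumes "f \<in> NCQSym" "0 \<in> set w" shows "f w = 0"
proof -
  have "\<forall>w. 0 \<in> set w \<longrightarrow> f w = 0" using assms(1) unfolding NCQSym_def mem_Collect_eq
    by (rule conjunct1[OF conjunct2])
  thus ?thesis using assms(2) by blast
qed
lemma NCQ_D3: assumes "f \<in> NCQSym" "set_comp n \<Phi>" "M_matches n \<Phi> w" "M_matches n \<Phi> w'"
  shows "f w = f w'"
proof -
  have "\<forall>n \<Phi> w w'. set_comp n \<Phi> \<longrightarrow> M_matches n \<Phi> w \<longrightarrow> M_matches n \<Phi> w' \<longrightarrow> f w = f w'"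
    using assms(1) unfolding NCQSym_def mem_Collect_eq by (rule conjunct2[OF conjunct2])
  thus ?thesis using assms(2-4) by blast
qed
lemma NCQ_I: assumes "\<forall>w. d < length w \<longrightarrow> f w = 0" "\<And>w. 0 \<in> set w \<Longrightarrow> f w = 0"
   "\<And>n \<Phi> w w'. set_comp n \<Phi> \<Longrightarrow> M_matches n \<Phi> w \<Longrightarrow> M_matches n \<Phi> w' \<Longrightarrow> f w = f w'"
  shows "f \<in> NCQSym"
  unfolding NCQSym_def mem_Collect_eq
proof (intro conjI allI impI)
  show "\<exists>d. \<forall>w. d < length w \<longrightarrow> f w = 0" using assms(1) by blast
qed (fact assms(2), rule assms(3), assumption+)

lemma NCQ_subspace: "FM.subspace (NCQSym :: 'a::field ncseries set)"
  unfolding FM.subspace_def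
proof (intro conjI ballI allI)
  show "0 \<in> (NCQSym :: 'a ncseries set)" by (simp add: NCQSym_def)
next
  fix x y :: "'a ncseries" assume x: "x \<in> NCQSym" and y: "y \<in> NCQSym"
  obtain d1 where d1: "\<forall>w. d1 < length w \<longrightarrow> x w = 0" using NCQ_D1[OF x] by blast
  obtain d2 where d2: "\<forall>w. d2 < length w \<longrightarrow> y w = 0" using NCQ_D1[OF y] by blast
  show "x + y \<in> NCQSym"
  proof (rule NCQ_I)
    show "\<forall>w. max d1 d2 < length w \<longrightarrow> (x + y) w = 0" using d1 d2 by simp
    show "\<And>w. 0 \<in> set w \<Longrightarrow> (x + y) w = 0" using NCQ_D2[OF x] NCQ_D2[OF y] by simp
    show "\<And>n \<Phi> w w'. set_comp n \<Phi> \<Longrightarrow> M_matches n \<Phi> w \<Longrightarrow> M_matches n \<Phi> w' \<Longrightarrow> (x + y) w = (x + y) w'"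
      using NCQ_D3[OF x] NCQ_D3[OF y] by (metis plus_fun_apply)
  qed
next
  fix c :: 'a and x :: "'a ncseries" assume x: "x \<in> NCQSym"
  obtain d1 where d1: "\<forall>w. d1 < length w \<longrightarrow> x w = 0" using NCQ_D1[OF x] by blast
  show "ser_scale c x \<in> NCQSym"
  proof (rule NCQ_I)
    show "\<forall>w. d1 < length w \<longrightarrow> c * x w = 0" using d1 by simp
    show "\<And>w. 0 \<in> set w \<Longrightarrow> c * x w = 0" using NCQ_D2[OF x] by simp
    show "\<And>n \<Phi> w w'. set_comp n \<Phi> \<Longrightarrow> M_matches n \<Phi> w \<Longrightarrow> M_matches n \<Phi> w' \<Longrightarrow> c * x w = c * x w'"
      using NCQ_D3[OF x] by metis
  qed
qed

lemma M_span: "set_comp n \<Psi> \<Longrightarrow> (Mbasis n \<Psi> :: 'a::field ncseries) \<in> FM.span (Fbasis ` all_set_comps)"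
proof (induction "n*n - mu \<Psi>" arbitrary: \<Psi> rule: less_induct)
  case less
  note s = less.prems
  define S where "S = {\<Phi>. set_comp n \<Phi> \<and> reforms \<Phi> \<Psi>}"
  have finS: "finite S" unfolding S_def by (rule finite_subset[OF _ sc_finite[of n]]) auto
  have F: "(Fbasis \<Psi> :: 'a ncseries) = (\<Sum>\<Phi>\<in>S. Mbasis n \<Phi>)"
    by (rule ext) (simp add: sum_apply_fun part1[OF s] S_def)
  have inS: "\<Psi> \<in> S" using reforms_iff[OF s s] refi_refl s by (simp add: S_def)
  have M: "(Mbasis n \<Psi> :: 'a ncseries) = Fbasis \<Psi> - (\<Sum>\<Phi>\<in>S-{\<Psi>}. Mbasis n \<Phi>)"
    unfolding F using sum.remove[OF finS inS, of "Mbasis n"] by (metis add_diff_cancel_right')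
  have "(Fbasis \<Psi> :: 'a ncseries) \<in> FM.span (Fbasis ` all_set_comps)"
    by (rule FM.span_base) (use s in \<open>auto simp: all_set_comps_def\<close>)
  moreover have "(\<Sum>\<Phi>\<in>S-{\<Psi>}. (Mbasis n \<Phi> :: 'a ncseries)) \<in> FM.span (Fbasis ` all_set_comps)"
  proof (rule FM.span_sum)
    fix \<Phi> assume "\<Phi> \<in> S - {\<Psi>}"
    hence t: "set_comp n \<Phi>" and r: "reforms \<Phi> \<Psi>" and ne: "\<Phi> \<noteq> \<Psi>" by (auto simp: S_def)
    have "refi n \<Psi> \<Phi>" using reforms_iff[OF s t] r by simp
    hence "mu \<Psi> < mu \<Phi>" using mu_less[OF s t] ne by auto
    moreover have "mu \<Phi> \<le> n*n" by (rule mu_le[OF t])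
    ultimately have "n*n - mu \<Phi> < n*n - mu \<Psi>" by linarith
    thus "(Mbasis n \<Phi> :: 'a ncseries) \<in> FM.span (Fbasis ` all_set_comps)" using less.hyps t by blast
  qed
  ultimately show ?case unfolding M by (rule FM.span_diff)
qed

lemma NCQ_span: assumes f: "(f :: 'a::field ncseries) \<in> NCQSym" shows "f \<in> FM.span (Fbasis ` all_set_comps)"
proof -
  obtain d where d: "\<forall>w. d < length w \<longrightarrow> f w = 0" using NCQ_D1[OF f] by blast
  note z = NCQ_D2[OF f] and c = NCQ_D3[OF f]
  define SC where "SC = Sigma {..d} (\<lambda>n. {\<Psi>. set_comp n \<Psi>})"
  have finSC: "finite SC" unfolding SC_def using sc_finite by (intro finite_SigmaI) auto
  define g where "g p = ser_scale (f (wt (snd p) (fst p))) (Mbasis (fst p) (snd p))" for p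
  have eq: "f = (\<Sum>p\<in>SC. g p)"
  proof (rule ext)
    fix w
    have "(\<Sum>p\<in>SC. g p) w = (\<Sum>p\<in>SC. g p w)" by (rule sum_apply_fun)
    also have "\<dots> = f w"
    proof (cases "d < length w \<or> 0 \<in> set w")
      case True
      have "g p w = 0" if "p \<in> SC" for p
      proof -
        have t: "set_comp (fst p) (snd p)" "fst p \<le> d" using that by (auto simp: SC_def)
        have "\<not> Mc (fst p) (snd p) w" using True t(2) by (auto simp: Mc_def)
        thus ?thesis by (simp add: g_def Mbasis_Mc[OF t(1)])
      qed
      moreover have "f w = 0" using True d z by blast
      ultimately show ?thesis by simp
    next
      case False
      define k where "k = length w"
      have kd: "k \<le> d" and pos: "\<forall>c\<in>set w. 0 < c" using False k_def by (auto intro!: Nat.gr0I)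
      define \<Psi>0 where "\<Psi>0 = pack k w"
      have t0: "set_comp k \<Psi>0" using pack_sc k_def \<Psi>0_def by simp
      have m0: "M_matches k \<Psi>0 w" using pack_M[of w k] k_def pos \<Psi>0_def by simp
      have mc0: "Mc k \<Psi>0 w" using m0 M_matches_iff[OF t0] by simp
      have p0: "(k, \<Psi>0) \<in> SC" using kd t0 by (simp add: SC_def)
      have "g p w = (if p = (k, \<Psi>0) then f w else 0)" if p: "p \<in> SC" for p
      proof -
        obtain n \<Psi> where pe: "p = (n, \<Psi>)" by (cases p)
        have t: "set_comp n \<Psi>" using p pe by (simp add: SC_def)
        show ?thesis
        proof (cases "p = (k, \<Psi>0)")
          case True
          hence "n = k" "\<Psi> = \<Psi>0" using pe by auto
          moreover have "M_matches k \<Psi>0 (wt \<Psi>0 k)" using Mc_wt M_matches_iff[OF t0] by simp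
          hence "f (wt \<Psi>0 k) = f w" using c[OF t0 _ m0] by simp
          ultimately show ?thesis using True pe mc0 by (simp add: g_def Mbasis_Mc[OF t0])
        next
          case False
          have "\<not> Mc n \<Psi> w"
          proof
            assume "Mc n \<Psi> w"
            moreover hence "n = k" by (simp add: Mc_def k_def)
            ultimately have "\<Psi> = \<Psi>0" using Mc_unique[OF _ t0 _ mc0] t by simp
            thus False using False pe \<open>n = k\<close> by simp
          qed
          thus ?thesis using False pe by (auto simp: g_def Mbasis_Mc[OF t])
        qed
      qed
      hence "(\<Sum>p\<in>SC. g p w) = (\<Sum>p\<in>SC. if p = (k, \<Psi>0) then f w else 0)" by (rule sum.cong[OF refl])
      also have "\<dots> = f w" using finSC p0 by simp
      finally show ?thesis .
    qed
    finally show "f w = (\<Sum>p\<in>SC. g p) w" by simp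
  qed
  have "(\<Sum>p\<in>SC. g p) \<in> FM.span (Fbasis ` all_set_comps)"
  proof (rule FM.span_sum)
    fix p assume "p \<in> SC"
    hence "set_comp (fst p) (snd p)" by (auto simp: SC_def)
    thus "g p \<in> FM.span (Fbasis ` all_set_comps)" unfolding g_def by (intro FM.span_scale M_span)
  qed
  thus ?thesis using eq by simp
qed

theorem mainTheorem11:
  shows "(\<forall>n \<Phi> w. set_comp n \<Phi> \<longrightarrow>
            (Fbasis \<Phi> :: 'a::field ncseries) w =
              (\<Sum>\<Psi> | set_comp n \<Psi> \<and> reforms \<Psi> \<Phi>. Mbasis n \<Psi> w))
       \<and> inj_on (Fbasis :: nat set list \<Rightarrow> 'a ncseries) all_set_comps
       \<and> Fbasis ` all_set_comps \<subseteq> (NCQSym :: 'a ncseries set)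
       \<and> module.independent ser_scale (Fbasis ` all_set_comps :: 'a ncseries set)
       \<and> module.span ser_scale (Fbasis ` all_set_comps) = (NCQSym :: 'a ncseries set)"
proof (intro conjI allI impI)
  show "\<And>n \<Phi> w. set_comp n \<Phi> \<Longrightarrow> (Fbasis \<Phi> :: 'a::field ncseries) w =
              (\<Sum>\<Psi> | set_comp n \<Psi> \<and> reforms \<Psi> \<Phi>. Mbasis n \<Psi> w)" by (rule part1)
  show "inj_on (Fbasis :: nat set list \<Rightarrow> 'a ncseries) all_set_comps" by (rule Fbasis_inj)
  have sub: "Fbasis ` all_set_comps \<subseteq> (NCQSym :: 'a ncseries set)"
    using Fbasis_NCQ by (auto simp: all_set_comps_def)
  show "Fbasis ` all_set_comps \<subseteq> (NCQSym :: 'a ncseries set)" by (rule sub)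
  show "module.independent ser_scale (Fbasis ` all_set_comps :: 'a ncseries set)" by (rule Findep)
  show "module.span ser_scale (Fbasis ` all_set_comps) = (NCQSym :: 'a ncseries set)"
  proof
    show "FM.span (Fbasis ` all_set_comps) \<subseteq> (NCQSym :: 'a ncseries set)"
      by (rule FM.span_minimal[OF sub NCQ_subspace])
    show "(NCQSym :: 'a ncseries set) \<subseteq> FM.span (Fbasis ` all_set_comps)"
      using NCQ_span by blast
  qed
qed

end
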